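(* Fix amplitudes $\overline r_{j,\mathrm{eq}}>0$ and consider the decoupled phase dynamics $$\frac{d\overline\theta_j}{dt}=\frac{\kappa_j}{2C\,\overline r_{j,\mathrm{eq}}}\Big(\iota_j\sin(\overline\theta_j-\gamma_j)-\sum_{\ell\ne j}g_{j\ell}\overline r_{\ell,\mathrm{eq}}\sin(\overline\theta_j-\overline\theta_\ell)\Big),\quad j=1,\dots,N.$$ Assume there is an equilibrium $\overline\theta_{\mathrm{eq}}$ such that $|\overline\theta_{j,\mathrm{eq}}-\overline\theta_{\ell,\mathrm{eq}}|<\pi/2$ and $|\overline\theta_{j,\mathrm{eq}}-\gamma_j|>\pi/2$ for all $j,\ell$ (angle differences measured on the circle, so the latter means $\cos(\overline\theta_{j,\mathrm{eq}}-\gamma_j)<0$). (i) If at least one $\iota_j>0$ (at least one constant-current load), then $\overline\theta_{\mathrm{eq}}$ is locally exponentially stable. (ii) If $\iota_j=0$ for all $j$, then the phase-synchronized equilibrium manifold $\{\overline\theta:\overline\theta_j=\overline\theta_\ell\ \forall j,\ell\}$ is locally exponentially stable.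
   Context: $C>0$, $\kappa_j>0$. Network: a real symmetric $N\times N$ Kron-reduced conductance matrix with off-diagonal entries $-g_{j\ell}$, $g_{j\ell}=g_{\ell j}\ge0$, whose associated graph (edges where $g_{j\ell}>0$) is connected. $\iota_j\ge 0$ and $\gamma_j\in\mathbb R$ are the amplitude and phase offset of an equivalent constant current source at node $j$. Phases live on the torus $\mathbb T^N$. *)

theory Defs
  imports "HOL-Analysis.Analysis"
begin

text \<open>Right-hand side of the decoupled phase dynamics (phases lifted to real^'n).\<close>
definition phase_field ::
  "real \<Rightarrow> ('n::finite \<Rightarrow> real) \<Rightarrow> ('n \<Rightarrow> real) \<Rightarrow> ('n \<Rightarrow> 'n \<Rightarrow> real)
   \<Rightarrow> ('n \<Rightarrow> real) \<Rightarrow> ('n \<Rightarrow> real) \<Rightarrow> real^'n \<Rightarrow> real^'n" where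
  "phase_field C \<kappa> r g \<iota> \<gamma> \<theta> =
     (\<chi> j. \<kappa> j / (2 * C * r j) *
        (\<iota> j * sin (\<theta>$j - \<gamma> j)
         - (\<Sum>l\<in>UNIV - {j}. g j l * r l * sin (\<theta>$j - \<theta>$l))))"

definition solves_on :: "('a::real_normed_vector \<Rightarrow> 'a) \<Rightarrow> (real \<Rightarrow> 'a) \<Rightarrow> real \<Rightarrow> bool" where
  "solves_on f x T \<longleftrightarrow>
     (\<forall>t\<in>{0..<T}. (x has_vector_derivative f (x t)) (at t within {0..<T}))"

definition loc_exp_stable_set :: "('a::real_normed_vector \<Rightarrow> 'a) \<Rightarrow> 'a set \<Rightarrow> bool" where
  "loc_exp_stable_set f S \<longleftrightarrow>
     (\<exists>\<delta>>0. \<exists>M. \<exists>a>0. \<forall>x T. T > 0 \<and> solves_on f x T \<and> infdist (x 0) S < \<delta> \<longrightarrow>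
        (\<forall>t\<in>{0..<T}. infdist (x t) S \<le> M * exp (- a * t) * infdist (x 0) S))"

definition loc_exp_stable_point :: "('a::real_normed_vector \<Rightarrow> 'a) \<Rightarrow> 'a \<Rightarrow> bool" where
  "loc_exp_stable_point f p \<longleftrightarrow>
     (\<exists>\<delta>>0. \<exists>M. \<exists>a>0. \<forall>x T. T > 0 \<and> solves_on f x T \<and> dist (x 0) p < \<delta> \<longrightarrow>
        (\<forall>t\<in>{0..<T}. dist (x t) p \<le> M * exp (- a * t) * dist (x 0) p))"

end

theory Submission
  imports Defs
begin


lemma sin_mvt: "\<exists>z. \<bar>z - (p::real)\<bar> \<le> \<bar>d\<bar> \<and> sin (p + d) - sin p = d * cos z"
proof (cases "d > 0")
  case True
  from MVT2[of p "p+d" sin cos] True obtain z where "p < z" "z < p + d" "sin (p+d) - sin p = (p + d - p) * cos z"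
    by (auto intro: DERIV_sin)
  then show ?thesis by (intro exI[of _ z]) auto
next
  case False
  show ?thesis
  proof (cases "d = 0")
    case True then show ?thesis by (intro exI[of _ p]) auto
  next
    case False
    with \<open>\<not> d > 0\<close> have "p + d < p" by auto
    from MVT2[OF this, of sin cos] obtain z where "p + d < z" "z < p" "sin p - sin (p+d) = (p - (p + d)) * cos z"
      by (auto intro: DERIV_sin)
    then show ?thesis by (intro exI[of _ z]) (auto simp: algebra_simps)
  qed
qed

lemma cos_lip: "\<bar>cos z - cos (p::real)\<bar> \<le> \<bar>z - p\<bar>"
proof -
  have "\<bar>cos z - cos p\<bar> = 2 * \<bar>sin ((z + p) / 2)\<bar> * \<bar>sin ((p - z) / 2)\<bar>"
    by (simp add: cos_diff_cos abs_mult)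
  also have "\<dots> \<le> 2 * 1 * \<bar>(p - z) / 2\<bar>"
    by (intro mult_mono abs_sin_x_le_abs_x) auto
  finally show ?thesis by simp
qed

lemma sin_pos_ineq:
  assumes "cos (p::real) \<ge> c" "c > 0" "\<bar>d\<bar> \<le> c / 2"
  shows "(sin (p + d) - sin p) * d \<ge> c / 2 * d\<^sup>2"
proof -
  obtain z where z: "\<bar>z - p\<bar> \<le> \<bar>d\<bar>" "sin (p + d) - sin p = d * cos z" using sin_mvt by blast
  have "cos z \<ge> c / 2" using cos_lip[of z p] z(1) assms by linarith
  then have "d\<^sup>2 * (c/2) \<le> d\<^sup>2 * cos z" by (intro mult_left_mono) auto
  then show ?thesis using z(2) by (simp add: power2_eq_square algebra_simps)
qed

lemma sin_neg_ineq:
  assumes "cos (p::real) \<le> - c" "c > 0" "\<bar>d\<bar> \<le> c / 2"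
  shows "(sin (p + d) - sin p) * d \<le> - (c / 2) * d\<^sup>2"
proof -
  obtain z where z: "\<bar>z - p\<bar> \<le> \<bar>d\<bar>" "sin (p + d) - sin p = d * cos z" using sin_mvt by blast
  have "cos z \<le> - c / 2" using cos_lip[of z p] z(1) assms by linarith
  then have "d\<^sup>2 * cos z \<le> d\<^sup>2 * (- c/2)" by (intro mult_left_mono) auto
  then show ?thesis using z(2) by (simp add: power2_eq_square algebra_simps)
qed

lemma finite_pos_min:
  fixes P :: "'a::finite \<Rightarrow> real"
  assumes "\<forall>x. P x > 0"
  shows "\<exists>c>0. \<forall>x. c \<le> P x"
proof -
  have "Min (range P) > 0" using assms by (subst Min_gr_iff) auto
  moreover have "\<forall>x. Min (range P) \<le> P x" by auto
  ultimately show ?thesis by blast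
qed

lemma finite_pos_max:
  fixes P :: "'a::finite \<Rightarrow> real"
  shows "\<exists>c. \<forall>x. P x \<le> c"
  by (rule exI[of _ "Max (range P)"]) auto

lemma sym_sum:
  fixes A s :: "'n::finite \<Rightarrow> 'n \<Rightarrow> real"
  assumes "\<forall>j l. A j l = A l j" "\<forall>j l. s j l = - s l j"
  shows "(\<Sum>j\<in>UNIV. \<Sum>l\<in>UNIV. A j l * u j * s j l) = (1/2) * (\<Sum>j\<in>UNIV. \<Sum>l\<in>UNIV. A j l * (u j - u l) * s j l)"
proof -
  have e: "A j l * u l * s j l = - (A l j * u l * s l j)" for j l
  proof -
    have "A j l = A l j" "s j l = - s l j" using assms by blast+
    then show ?thesis by simp
  qed
  have "(\<Sum>j\<in>UNIV. \<Sum>l\<in>UNIV. A j l * u l * s j l) = (\<Sum>l\<in>UNIV. \<Sum>j\<in>UNIV. A j l * u l * s j l)" by (rule sum.swap)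
  also have "\<dots> = (\<Sum>l\<in>UNIV. \<Sum>j\<in>UNIV. - (A l j * u l * s l j))" by (simp only: e)
  also have "\<dots> = - (\<Sum>j\<in>UNIV. \<Sum>l\<in>UNIV. A j l * u j * s j l)" by (simp add: sum_negf)
  finally have *: "(\<Sum>j\<in>UNIV. \<Sum>l\<in>UNIV. A j l * u l * s j l) = - (\<Sum>j\<in>UNIV. \<Sum>l\<in>UNIV. A j l * u j * s j l)" .
  have "(\<Sum>j\<in>UNIV. \<Sum>l\<in>UNIV. A j l * (u j - u l) * s j l) = (\<Sum>j\<in>UNIV. \<Sum>l\<in>UNIV. A j l * u j * s j l) - (\<Sum>j\<in>UNIV. \<Sum>l\<in>UNIV. A j l * u l * s j l)"
    by (simp add: algebra_simps sum_subtractf)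
  then show ?thesis using * by simp
qed

lemma conn_const:
  assumes "(\<lambda>a b. g a b > (0::real))\<^sup>*\<^sup>* j l" "\<forall>a b. g a b > 0 \<longrightarrow> u a = u b"
  shows "u j = u l"
  using assms(1) by induction (use assms(2) in auto)



lemma exp_decay:
  fixes v v' :: "real \<Rightarrow> real"
  assumes a: "a > 0"
  and der: "\<forall>t\<in>{0..<T}. (v has_real_derivative v' t) (at t within {0..<T})"
  and dec: "\<forall>t\<in>{0..<T}. v t < L \<longrightarrow> v' t \<le> - (2 * a) * v t"
  and v0: "v 0 < L" "0 \<le> v 0"
  shows "\<forall>t\<in>{0..<T}. v t \<le> exp (- (2 * a) * t) * v 0"
proof -
  have contv: "continuous_on {0..<T} v"
    using der by (auto simp: continuous_on_eq_continuous_within intro: DERIV_continuous)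
  define h where "h t = exp (2 * a * t) * v t" for t
  have conth: "continuous_on {0..<T} h" unfolding h_def by (intro continuous_intros contv)
  have A: "h t1 \<le> h 0" if t1: "t1 \<in> {0..<T}" and below: "\<forall>s\<in>{0..<t1}. v s < L" for t1
  proof (rule DERIV_nonpos_imp_decreasing_open[of 0 t1 h])
    show "0 \<le> t1" using t1 by auto
    show "continuous_on {0..t1} h" using conth by (rule continuous_on_subset) (use t1 in auto)
    fix x assume x: "0 < x" "x < t1"
    then have xi: "x \<in> interior {0..<T}" using t1 by auto
    have "(v has_real_derivative v' x) (at x within {0..<T})"
      using der x t1 by auto
    then have dv: "(v has_real_derivative v' x) (at x)"
      using at_within_interior[OF xi] by simp
    have "(h has_real_derivative (2 * a * exp (2 * a * x) * v x + exp (2 * a * x) * v' x)) (at x)"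
      unfolding h_def by (auto intro!: derivative_eq_intros dv)
    moreover have "2 * a * exp (2 * a * x) * v x + exp (2 * a * x) * v' x \<le> 0"
    proof -
      have "v' x \<le> - (2 * a) * v x" using dec below x t1 by auto
      then have "exp (2 * a * x) * v' x \<le> exp (2 * a * x) * (- (2 * a) * v x)"
        by (intro mult_left_mono) auto
      then show ?thesis by (simp add: algebra_simps)
    qed
    ultimately show "\<exists>y. (h has_real_derivative y) (at x) \<and> y \<le> 0" by blast
  qed
  have hv: "v t \<le> exp (- (2 * a) * t) * v 0" if "h t \<le> h 0" for t
  proof -
    have "exp (2 * a * t) * v t \<le> v 0" using that by (simp add: h_def)
    then have "exp (- (2 * a) * t) * (exp (2 * a * t) * v t) \<le> exp (- (2 * a) * t) * v 0"
      by (intro mult_left_mono) auto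
    then show ?thesis by (simp add: exp_minus field_simps)
  qed
  have B: "\<forall>t\<in>{0..<T}. v t < L"
  proof (rule ccontr)
    assume "\<not> ?thesis"
    then obtain t1 where t1: "t1 \<in> {0..<T}" "v t1 \<ge> L" by force
    define K where "K = {0..t1} \<inter> v -` {L..}"
    have cK: "closed K" unfolding K_def
      by (intro continuous_closed_preimage continuous_on_subset[OF contv]) (use t1 in auto)
    have neK: "K \<noteq> {}" using t1 by (auto simp: K_def)
    have bK: "bdd_below K" unfolding K_def by (rule bdd_belowI[of _ 0]) auto
    define s0 where "s0 = Inf K"
    have s0K: "s0 \<in> K" unfolding s0_def using closed_contains_Inf[OF neK bK cK] .
    then have s0: "s0 \<in> {0..<T}" "v s0 \<ge> L" using t1 by (auto simp: K_def)
    have "\<forall>s\<in>{0..<s0}. v s < L"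
    proof
      fix s assume s: "s \<in> {0..<s0}"
      show "v s < L"
      proof (rule ccontr)
        assume "\<not> v s < L"
        then have "s \<in> K" using s s0K by (auto simp: K_def)
        then have "s0 \<le> s" unfolding s0_def using bK by (rule cInf_lower)
        then show False using s by auto
      qed
    qed
    from A[OF s0(1) this] have "v s0 \<le> exp (- (2 * a) * s0) * v 0" by (rule hv)
    also have "\<dots> \<le> 1 * v 0" using s0 a v0 by (intro mult_right_mono) auto
    finally show False using s0 v0 by auto
  qed
  show ?thesis
  proof
    fix t assume t: "t \<in> {0..<T}"
    then have "\<forall>s\<in>{0..<t}. v s < L" using B by auto
    from A[OF t this] show "v t \<le> exp (- (2 * a) * t) * v 0" by (rule hv)
  qed
qed

lemma quad_lower:
  fixes Q :: "real^'n \<Rightarrow> real"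
  assumes cont: "continuous_on UNIV Q" and hom: "\<forall>c e. Q (c *\<^sub>R e) = c\<^sup>2 * Q e"
  and S: "closed S" "\<forall>c e. e \<in> S \<longrightarrow> c *\<^sub>R e \<in> S" and pos: "\<forall>e\<in>S. e \<noteq> 0 \<longrightarrow> Q e > 0"
  shows "\<exists>\<mu>>0. \<forall>e\<in>S. Q e \<ge> \<mu> * (norm e)\<^sup>2"
proof -
  define K where "K = sphere 0 1 \<inter> S"
  have Q0: "Q 0 = 0" using hom[rule_format, of 0 0] by simp
  have scale: "Q e = (norm e)\<^sup>2 * Q ((1 / norm e) *\<^sub>R e)" if "e \<noteq> 0" for e
    using hom[rule_format, of "1 / norm e" e] that by (simp add: power2_eq_square)
  have inK: "(1 / norm e) *\<^sub>R e \<in> K" if "e \<in> S" "e \<noteq> 0" for e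
    using that S(2) by (auto simp: K_def)
  show ?thesis
  proof (cases "K = {}")
    case True
    have "e = 0" if "e \<in> S" for e using inK[OF that] True by blast
    then show ?thesis using Q0 by (intro exI[of _ 1]) force
  next
    case False
    have "compact K" unfolding K_def using S(1) by (intro compact_Int_closed) auto
    from continuous_attains_inf[OF this False continuous_on_subset[OF cont]]
    obtain e0 where e0: "e0 \<in> K" "\<forall>y\<in>K. Q e0 \<le> Q y" by auto
    have mu: "Q e0 > 0" using e0 pos by (auto simp: K_def)
    show ?thesis
    proof (intro exI[of _ "Q e0"] conjI ballI mu)
      fix e assume e: "e \<in> S"
      show "Q e0 * (norm e)\<^sup>2 \<le> Q e"
      proof (cases "e = 0")
        case True then show ?thesis using Q0 by simp
      next
        case False
        have "Q e0 \<le> Q ((1 / norm e) *\<^sub>R e)" using e0 inK[OF e False] by auto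
        then have "(norm e)\<^sup>2 * Q e0 \<le> (norm e)\<^sup>2 * Q ((1 / norm e) *\<^sub>R e)"
          by (intro mult_left_mono) auto
        then show ?thesis using scale[OF False] by (simp add: mult.commute)
      qed
    qed
  qed
qed



definition Fn :: "('n::finite \<Rightarrow> real) \<Rightarrow> ('n \<Rightarrow> 'n \<Rightarrow> real) \<Rightarrow> ('n \<Rightarrow> real) \<Rightarrow> ('n \<Rightarrow> real) \<Rightarrow> real^'n \<Rightarrow> 'n \<Rightarrow> real" where
  "Fn r g \<iota> \<gamma> \<theta> j = \<iota> j * sin (\<theta>$j - \<gamma> j) - (\<Sum>l\<in>UNIV. g j l * r l * sin (\<theta>$j - \<theta>$l))"

lemma sum_drop_diag:
  "(\<Sum>l\<in>UNIV - {j}. g j l * r l * sin (\<theta>$j - \<theta>$l)) = (\<Sum>l\<in>UNIV. g j l * r l * sin ((\<theta>::real^'n::finite)$j - \<theta>$l))"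
  by (subst sum.remove[of UNIV j]) auto

lemma field_F:
  assumes "C > 0" "\<kappa> j > 0" "r j > 0"
  shows "2 * C * (r j)\<^sup>2 / \<kappa> j * (phase_field C \<kappa> r g \<iota> \<gamma> \<theta>)$j = r j * Fn r g \<iota> \<gamma> \<theta> j"
  using assms unfolding phase_field_def Fn_def sum_drop_diag
  by (simp add: power2_eq_square field_simps)

lemma field_comp:
  assumes "C > 0" "\<kappa> j > 0" "r j > 0"
  shows "(phase_field C \<kappa> r g \<iota> \<gamma> \<theta>)$j = \<kappa> j / (2 * C * r j) * Fn r g \<iota> \<gamma> \<theta> j"
  using assms unfolding phase_field_def Fn_def sum_drop_diag by simp

lemma eq_F:
  assumes "C > 0" "\<kappa> j > 0" "r j > 0" "phase_field C \<kappa> r g \<iota> \<gamma> p = 0"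
  shows "Fn r g \<iota> \<gamma> p j = 0"
proof -
  have "\<kappa> j / (2 * C * r j) * Fn r g \<iota> \<gamma> p j = 0"
    using field_comp[of C \<kappa> j r g \<iota> \<gamma> p] assms by simp
  then show ?thesis using assms by simp
qed

lemma key_identity:
  fixes r :: "'n::finite \<Rightarrow> real"
  assumes gs: "\<forall>j l. g j l = g l j"
  shows "(\<Sum>j\<in>UNIV. r j * u j * (Fn r g \<iota> \<gamma> \<theta> j - Fn r g \<iota> \<gamma> p j))
     = (\<Sum>j\<in>UNIV. r j * \<iota> j * u j * (sin (\<theta>$j - \<gamma> j) - sin (p$j - \<gamma> j)))
       - (1/2) * (\<Sum>j\<in>UNIV. \<Sum>l\<in>UNIV. (g j l * r j * r l) * (u j - u l) * ((sin (\<theta>$j - \<theta>$l) - sin (p$j - p$l))))"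
proof -
  let ?A = "\<lambda>j l. g j l * r j * r l"
  let ?s = "\<lambda>j l. sin (\<theta>$j - \<theta>$l) - sin (p$j - p$l)"
  have As: "\<forall>j l. ?A j l = ?A l j" using gs by (auto simp: mult.commute mult.left_commute)
  have ss: "\<forall>j l. ?s j l = - ?s l j"
  proof (intro allI)
    fix j l
    have "sin (\<theta>$j - \<theta>$l) = - sin (\<theta>$l - \<theta>$j)" "sin (p$j - p$l) = - sin (p$l - p$j)"
      by (metis minus_diff_eq sin_minus)+
    then show "?s j l = - ?s l j" by simp
  qed
  have "(\<Sum>j\<in>UNIV. r j * u j * (Fn r g \<iota> \<gamma> \<theta> j - Fn r g \<iota> \<gamma> p j))
     = (\<Sum>j\<in>UNIV. r j * \<iota> j * u j * (sin (\<theta>$j - \<gamma> j) - sin (p$j - \<gamma> j)))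
       - (\<Sum>j\<in>UNIV. \<Sum>l\<in>UNIV. ?A j l * u j * ?s j l)"
    unfolding Fn_def
    by (simp add: algebra_simps sum_subtractf sum_distrib_left sum.distrib)
  also have "(\<Sum>j\<in>UNIV. \<Sum>l\<in>UNIV. ?A j l * u j * ?s j l) = (1/2) * (\<Sum>j\<in>UNIV. \<Sum>l\<in>UNIV. ?A j l * (u j - u l) * ?s j l)"
    by (rule sym_sum[OF As ss])
  finally show ?thesis .
qed

lemma norm_sq_vec: "(norm (u::real^'n::finite))\<^sup>2 = (\<Sum>j\<in>UNIV. (u$j)\<^sup>2)"
  unfolding norm_vec_def L2_set_def by (simp add: sum_nonneg)

lemma weighted_bounds:
  fixes w :: "'n::finite \<Rightarrow> real"
  assumes "\<forall>j. wl \<le> w j" "\<forall>j. w j \<le> wu"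
  shows "wl * (norm u)\<^sup>2 \<le> (\<Sum>j\<in>UNIV. w j * (u$j)\<^sup>2)" "(\<Sum>j\<in>UNIV. w j * (u$j)\<^sup>2) \<le> wu * (norm u)\<^sup>2"
  unfolding norm_sq_vec sum_distrib_left using assms
  by (auto intro!: sum_mono mult_right_mono)

lemma comp_deriv:
  assumes "(x has_vector_derivative D) F"
  shows "((\<lambda>t. x t $ j) has_real_derivative D $ j) F"
  unfolding has_real_derivative_iff_has_vector_derivative
  by (rule bounded_linear.has_vector_derivative[OF bounded_linear_vec_nth assms])



lemma vsum_deriv:
  fixes x :: "real \<Rightarrow> real^'n::finite"
  assumes "(x has_vector_derivative D) (at t within S)"
  shows "((\<lambda>t. \<Sum>j\<in>UNIV. w j * (x t $ j - p $ j)\<^sup>2 / 2) has_real_derivative (\<Sum>j\<in>UNIV. w j * (x t $ j - p $ j) * D $ j)) (at t within S)"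
proof (rule DERIV_sum)
  fix j :: 'n
  have dj: "((\<lambda>t. x t $ j) has_real_derivative D $ j) (at t within S)" by (rule comp_deriv[OF assms])
  show "((\<lambda>t. w j * (x t $ j - p $ j)\<^sup>2 / 2) has_real_derivative w j * (x t $ j - p $ j) * D $ j) (at t within S)"
    by (rule derivative_eq_intros dj refl | simp)+
qed

lemma part1:
  fixes C :: real and \<kappa> r \<iota> \<gamma> :: "'n::finite \<Rightarrow> real"
    and g :: "'n \<Rightarrow> 'n \<Rightarrow> real" and \<theta>eq :: "real^'n"
  assumes C_pos: "C > 0"
    and \<kappa>_pos: "\<forall>j. \<kappa> j > 0"
    and r_pos: "\<forall>j. r j > 0"
    and g_sym: "\<forall>j l. g j l = g l j"
    and g_nonneg: "\<forall>j l. g j l \<ge> 0"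
    and connected: "\<forall>j l. (\<lambda>a b. g a b > 0)\<^sup>*\<^sup>* j l"
    and \<iota>_nonneg: "\<forall>j. \<iota> j \<ge> 0"
    and equilibrium: "phase_field C \<kappa> r g \<iota> \<gamma> \<theta>eq = 0"
    and close_phases: "\<forall>j l. cos (\<theta>eq$j - \<theta>eq$l) > 0"
    and anti_phase: "\<forall>j. cos (\<theta>eq$j - \<gamma> j) < 0"
    and load: "\<iota> j0 > 0"
  shows "loc_exp_stable_point (phase_field C \<kappa> r g \<iota> \<gamma>) \<theta>eq"
proof -
  let ?f = "phase_field C \<kappa> r g \<iota> \<gamma>"
  obtain c1 where c1: "c1 > 0" "\<forall>j. c1 \<le> - cos (\<theta>eq$j - \<gamma> j)"
    using finite_pos_min[of "\<lambda>j. - cos (\<theta>eq$j - \<gamma> j)"] anti_phase by auto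
  obtain c2 where c2: "c2 > 0" "\<forall>jl. c2 \<le> cos (\<theta>eq$(fst jl) - \<theta>eq$(snd jl))"
    using finite_pos_min[of "\<lambda>jl::'n\<times>'n. cos (\<theta>eq$(fst jl) - \<theta>eq$(snd jl))"] close_phases by auto
  have c2': "c2 \<le> cos (\<theta>eq$j - \<theta>eq$l)" for j l using c2(2)[rule_format, of "(j,l)"] by simp
  define \<rho> where "\<rho> = min (c1/2) (c2/4)"
  have \<rho>: "\<rho> > 0" "\<rho> \<le> c1/2" "2 * \<rho> \<le> c2/2" using c1 c2 by (auto simp: \<rho>_def)
  define A where "A j l = g j l * r j * r l" for j l
  have A_nonneg: "A j l \<ge> 0" for j l using g_nonneg r_pos by (auto simp: A_def less_imp_le)
  define Q where "Q u = (\<Sum>j\<in>UNIV. r j * \<iota> j * (c1/2) * (u$j)\<^sup>2)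
      + (1/2) * (\<Sum>j\<in>UNIV. \<Sum>l\<in>UNIV. A j l * (c2/2) * (u$j - u$l)\<^sup>2)" for u :: "real^'n"
  have Q_cont: "continuous_on UNIV Q" unfolding Q_def by (intro continuous_intros)
  have Q_hom: "\<forall>c u. Q (c *\<^sub>R u) = c\<^sup>2 * Q u"
  proof (intro allI)
    fix c and u :: "real^'n"
    have "(c * u$j - c * u$l)\<^sup>2 = c\<^sup>2 * (u$j - u$l)\<^sup>2" for j l by (simp add: power2_eq_square algebra_simps)
    then show "Q (c *\<^sub>R u) = c\<^sup>2 * Q u"
      unfolding Q_def by (simp add: power_mult_distrib sum_distrib_left algebra_simps)
  qed
  have t1_nonneg: "r j * \<iota> j * (c1/2) * (u$j)\<^sup>2 \<ge> 0" for j u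
    using r_pos \<iota>_nonneg c1 by (intro mult_nonneg_nonneg) (auto simp: less_imp_le)
  have t2_nonneg: "A j l * (c2/2) * (u$j - u$l)\<^sup>2 \<ge> 0" for j l u
    using A_nonneg c2 by (intro mult_nonneg_nonneg) auto
  have Q_pos: "\<forall>u\<in>UNIV. u \<noteq> 0 \<longrightarrow> Q u > 0"
  proof (intro ballI impI)
    fix u :: "real^'n" assume u: "u \<noteq> 0"
    have S1: "(\<Sum>j\<in>UNIV. r j * \<iota> j * (c1/2) * (u$j)\<^sup>2) \<ge> 0" by (intro sum_nonneg t1_nonneg)
    have S2: "(\<Sum>j\<in>UNIV. \<Sum>l\<in>UNIV. A j l * (c2/2) * (u$j - u$l)\<^sup>2) \<ge> 0"
      by (intro sum_nonneg t2_nonneg)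
    show "Q u > 0"
    proof (rule ccontr)
      assume "\<not> Q u > 0"
      then have z1: "(\<Sum>j\<in>UNIV. r j * \<iota> j * (c1/2) * (u$j)\<^sup>2) = 0"
        and z2: "(\<Sum>j\<in>UNIV. \<Sum>l\<in>UNIV. A j l * (c2/2) * (u$j - u$l)\<^sup>2) = 0"
        using S1 S2 unfolding Q_def by linarith+
      have e1: "r j * \<iota> j * (c1/2) * (u$j)\<^sup>2 = 0" for j
        using sum_nonneg_eq_0_iff[of "UNIV::'n set" "\<lambda>j. r j * \<iota> j * (c1/2) * (u$j)\<^sup>2", OF finite t1_nonneg] z1
        by blast
      have "(\<Sum>l\<in>UNIV. A j l * (c2/2) * (u$j - u$l)\<^sup>2) = 0" for j
        using sum_nonneg_eq_0_iff[of "UNIV::'n set" "\<lambda>j. \<Sum>l\<in>UNIV. A j l * (c2/2) * (u$j - u$l)\<^sup>2", OF finite sum_nonneg[OF t2_nonneg]] z2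
        by blast
      then have e2: "A j l * (c2/2) * (u$j - u$l)\<^sup>2 = 0" for j l
        using sum_nonneg_eq_0_iff[of "UNIV::'n set" "\<lambda>l. A j l * (c2/2) * (u$j - u$l)\<^sup>2", OF finite t2_nonneg]
        by blast
      have edge: "\<forall>a b. g a b > 0 \<longrightarrow> u$a = u$b"
      proof (intro allI impI)
        fix a b assume "g a b > 0"
        then have "A a b > 0" using r_pos by (auto simp: A_def)
        then show "u$a = u$b" using e2[of a b] c2 by auto
      qed
      have "u$j0 = 0" using e1[of j0] r_pos[rule_format, of j0] load c1 by auto
      then have "u$j = 0" for j using conn_const[OF connected[rule_format, of j j0] edge] by simp
      then show False using u by (simp add: vec_eq_iff)
    qed
  qed
  obtain \<mu> where \<mu>: "\<mu> > 0" "\<forall>u\<in>UNIV. Q u \<ge> \<mu> * (norm u)\<^sup>2"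
    using quad_lower[OF Q_cont Q_hom closed_UNIV _ Q_pos] by auto
  define w where "w j = 2 * C * (r j)\<^sup>2 / \<kappa> j" for j
  have w_pos: "w j > 0" for j using C_pos r_pos[rule_format, of j] \<kappa>_pos[rule_format, of j] by (auto simp: w_def)
  obtain wl where wl: "wl > 0" "\<forall>j. wl \<le> w j" using finite_pos_min[of w] w_pos by auto
  obtain wu where wu: "\<forall>j. w j \<le> wu" using finite_pos_max[of w] by auto
  have wlu: "wl \<le> wu" using wl wu by (meson order_trans)
  have wu_pos: "wu > 0" using wl wlu by auto
  define V where "V \<theta> = (\<Sum>j\<in>UNIV. w j * (\<theta>$j - \<theta>eq$j)\<^sup>2 / 2)" for \<theta> :: "real^'n"
  have V_eq: "V \<theta> = (\<Sum>j\<in>UNIV. w j * ((\<theta> - \<theta>eq)$j)\<^sup>2) / 2" for \<theta>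
    unfolding V_def by (simp add: sum_divide_distrib)
  have V_lo: "wl * (norm (\<theta> - \<theta>eq))\<^sup>2 / 2 \<le> V \<theta>" for \<theta>
    unfolding V_eq using weighted_bounds(1)[OF wl(2) wu, of "\<theta> - \<theta>eq"] by simp
  have V_hi: "V \<theta> \<le> wu * (norm (\<theta> - \<theta>eq))\<^sup>2 / 2" for \<theta>
    unfolding V_eq using weighted_bounds(2)[OF wl(2) wu, of "\<theta> - \<theta>eq"] by simp
  have Feq: "Fn r g \<iota> \<gamma> \<theta>eq j = 0" for j using eq_F[OF C_pos] \<kappa>_pos r_pos equilibrium by blast
  have key: "(\<Sum>j\<in>UNIV. w j * (\<theta>$j - \<theta>eq$j) * (?f \<theta>)$j) \<le> - Q (\<theta> - \<theta>eq)"
    if n\<rho>: "norm (\<theta> - \<theta>eq) < \<rho>" for \<theta>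
  proof -
    define u where "u = \<theta> - \<theta>eq"
    have ub: "\<bar>u$j\<bar> < \<rho>" for j using component_le_norm_cart[of u j] n\<rho> by (simp add: u_def)
    have "(\<Sum>j\<in>UNIV. w j * (\<theta>$j - \<theta>eq$j) * (?f \<theta>)$j)
        = (\<Sum>j\<in>UNIV. r j * u$j * (Fn r g \<iota> \<gamma> \<theta> j - Fn r g \<iota> \<gamma> \<theta>eq j))"
    proof (rule sum.cong[OF refl])
      fix j
      have h: "w j * (?f \<theta>)$j = r j * Fn r g \<iota> \<gamma> \<theta> j"
        unfolding w_def using field_F[OF C_pos, of \<kappa> j r] \<kappa>_pos r_pos by auto
      have "w j * (\<theta>$j - \<theta>eq$j) * (?f \<theta>)$j = (\<theta>$j - \<theta>eq$j) * (w j * (?f \<theta>)$j)" by (simp add: ac_simps)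
      also have "\<dots> = (\<theta>$j - \<theta>eq$j) * (r j * Fn r g \<iota> \<gamma> \<theta> j)" by (simp only: h)
      finally show "w j * (\<theta>$j - \<theta>eq$j) * (?f \<theta>)$j = r j * u$j * (Fn r g \<iota> \<gamma> \<theta> j - Fn r g \<iota> \<gamma> \<theta>eq j)"
        by (simp add: Feq u_def ac_simps)
    qed
    also have "\<dots> = (\<Sum>j\<in>UNIV. r j * \<iota> j * u$j * (sin (\<theta>$j - \<gamma> j) - sin (\<theta>eq$j - \<gamma> j)))
       - (1/2) * (\<Sum>j\<in>UNIV. \<Sum>l\<in>UNIV. (g j l * r j * r l) * (u$j - u$l) * ((sin (\<theta>$j - \<theta>$l) - sin (\<theta>eq$j - \<theta>eq$l))))"
      by (rule key_identity[OF g_sym])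
    also have "\<dots> \<le> (\<Sum>j\<in>UNIV. - (r j * \<iota> j * (c1/2) * (u$j)\<^sup>2))
       - (1/2) * (\<Sum>j\<in>UNIV. \<Sum>l\<in>UNIV. A j l * (c2/2) * (u$j - u$l)\<^sup>2)"
    proof (rule diff_mono)
      show "(\<Sum>j\<in>UNIV. r j * \<iota> j * u$j * (sin (\<theta>$j - \<gamma> j) - sin (\<theta>eq$j - \<gamma> j)))
          \<le> (\<Sum>j\<in>UNIV. - (r j * \<iota> j * (c1/2) * (u$j)\<^sup>2))"
      proof (rule sum_mono)
        fix j
        have "(sin ((\<theta>eq$j - \<gamma> j) + u$j) - sin (\<theta>eq$j - \<gamma> j)) * u$j \<le> - (c1/2) * (u$j)\<^sup>2"
          using sin_neg_ineq[of "\<theta>eq$j - \<gamma> j" c1 "u$j"] c1(1) c1(2)[rule_format, of j] ub[of j] \<rho> by auto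
        moreover have "(\<theta>eq$j - \<gamma> j) + u$j = \<theta>$j - \<gamma> j" by (simp add: u_def)
        ultimately have "(sin (\<theta>$j - \<gamma> j) - sin (\<theta>eq$j - \<gamma> j)) * u$j \<le> - (c1/2) * (u$j)\<^sup>2" by simp
        moreover have "r j * \<iota> j \<ge> 0" using r_pos \<iota>_nonneg by (simp add: less_imp_le)
        ultimately have "(r j * \<iota> j) * ((sin (\<theta>$j - \<gamma> j) - sin (\<theta>eq$j - \<gamma> j)) * u$j) \<le> (r j * \<iota> j) * (- (c1/2) * (u$j)\<^sup>2)"
          by (intro mult_left_mono)
        then show "r j * \<iota> j * u$j * (sin (\<theta>$j - \<gamma> j) - sin (\<theta>eq$j - \<gamma> j)) \<le> - (r j * \<iota> j * (c1/2) * (u$j)\<^sup>2)"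
          by (simp add: algebra_simps)
      qed
      show "(1/2) * (\<Sum>j\<in>UNIV. \<Sum>l\<in>UNIV. A j l * (c2/2) * (u$j - u$l)\<^sup>2)
          \<le> (1/2) * (\<Sum>j\<in>UNIV. \<Sum>l\<in>UNIV. (g j l * r j * r l) * (u$j - u$l) * ((sin (\<theta>$j - \<theta>$l) - sin (\<theta>eq$j - \<theta>eq$l))))"
      proof (intro mult_left_mono sum_mono)
        fix j l
        have "\<bar>u$j - u$l\<bar> \<le> c2/2" using ub[of j] ub[of l] \<rho> by linarith
        then have "(sin ((\<theta>eq$j - \<theta>eq$l) + (u$j - u$l)) - sin (\<theta>eq$j - \<theta>eq$l)) * (u$j - u$l) \<ge> c2/2 * (u$j - u$l)\<^sup>2"
          using sin_pos_ineq[of c2 "\<theta>eq$j - \<theta>eq$l" "u$j - u$l"] c2' c2 by auto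
        moreover have "(\<theta>eq$j - \<theta>eq$l) + (u$j - u$l) = \<theta>$j - \<theta>$l" by (simp add: u_def)
        ultimately have "(sin (\<theta>$j - \<theta>$l) - sin (\<theta>eq$j - \<theta>eq$l)) * (u$j - u$l) \<ge> c2/2 * (u$j - u$l)\<^sup>2" by simp
        then have "A j l * (c2/2 * (u$j - u$l)\<^sup>2) \<le> A j l * ((sin (\<theta>$j - \<theta>$l) - sin (\<theta>eq$j - \<theta>eq$l)) * (u$j - u$l))"
          by (intro mult_left_mono A_nonneg)
        then show "A j l * (c2/2) * (u$j - u$l)\<^sup>2 \<le> (g j l * r j * r l) * (u$j - u$l) * ((sin (\<theta>$j - \<theta>$l) - sin (\<theta>eq$j - \<theta>eq$l)))"
          by (simp add: A_def algebra_simps)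
      qed simp
    qed
    also have "\<dots> = - Q u" unfolding Q_def by (simp add: sum_negf)
    finally show ?thesis by (simp add: u_def)
  qed
  define a where "a = \<mu> / wu"
  have a_pos: "a > 0" using \<mu> wu_pos by (simp add: a_def)
  define L where "L = wl * \<rho>\<^sup>2 / 2"
  define \<delta> where "\<delta> = \<rho> * sqrt (wl / wu)"
  define M where "M = sqrt (wu / wl)"
  have \<delta>_pos: "\<delta> > 0" using \<rho> wl wu_pos by (simp add: \<delta>_def)
  have \<delta>sq: "wu * \<delta>\<^sup>2 / 2 = L" using wl wu_pos by (simp add: \<delta>_def L_def power_mult_distrib)
  have small: "norm (\<theta> - \<theta>eq) < \<rho>" if "V \<theta> < L" for \<theta>
  proof -
    have "wl * (norm (\<theta> - \<theta>eq))\<^sup>2 < wl * \<rho>\<^sup>2" using V_lo[of \<theta>] that by (simp add: L_def)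
    then have "(norm (\<theta> - \<theta>eq))\<^sup>2 < \<rho>\<^sup>2" using wl by simp
    then show ?thesis using \<rho> by (simp add: power2_less_imp_less)
  qed
  have decay: "(\<Sum>j\<in>UNIV. w j * (\<theta>$j - \<theta>eq$j) * (?f \<theta>)$j) \<le> - (2 * a) * V \<theta>" if "V \<theta> < L" for \<theta>
  proof -
    have "(\<Sum>j\<in>UNIV. w j * (\<theta>$j - \<theta>eq$j) * (?f \<theta>)$j) \<le> - Q (\<theta> - \<theta>eq)" using key small that by blast
    also have "\<dots> \<le> - (\<mu> * (norm (\<theta> - \<theta>eq))\<^sup>2)" using \<mu> by auto
    also have "\<dots> \<le> - (2 * a) * V \<theta>"
    proof -
      have "V \<theta> * 2 \<le> wu * (norm (\<theta> - \<theta>eq))\<^sup>2" using V_hi[of \<theta>] by simp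
      then have "\<mu> * (V \<theta> * 2) \<le> \<mu> * (wu * (norm (\<theta> - \<theta>eq))\<^sup>2)" using \<mu> by (intro mult_left_mono) auto
      then show ?thesis using wu_pos by (simp add: a_def field_simps)
    qed
    finally show ?thesis .
  qed
  show ?thesis unfolding loc_exp_stable_point_def
  proof (rule exI[of _ \<delta>], intro conjI \<delta>_pos, rule exI[of _ M], rule exI[of _ a], intro conjI a_pos allI impI)
    fix x :: "real \<Rightarrow> real^'n" and T :: real
    assume asm: "T > 0 \<and> solves_on ?f x T \<and> dist (x 0) \<theta>eq < \<delta>"
    then have sol: "\<forall>t\<in>{0..<T}. (x has_vector_derivative ?f (x t)) (at t within {0..<T})"
      and d0: "dist (x 0) \<theta>eq < \<delta>" by (auto simp: solves_on_def)
    define v where "v t = V (x t)" for t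
    define v' where "v' t = (\<Sum>j\<in>UNIV. w j * (x t$j - \<theta>eq$j) * (?f (x t))$j)" for t
    have der: "\<forall>t\<in>{0..<T}. (v has_real_derivative v' t) (at t within {0..<T})"
      unfolding v_def v'_def V_def using sol vsum_deriv by blast
    have dec: "\<forall>t\<in>{0..<T}. v t < L \<longrightarrow> v' t \<le> - (2 * a) * v t"
      unfolding v_def v'_def using decay by blast
    have n0: "norm (x 0 - \<theta>eq) < \<delta>" using d0 by (simp add: dist_norm)
    have n0sq: "(norm (x 0 - \<theta>eq))\<^sup>2 < \<delta>\<^sup>2" using n0 by (intro power_strict_mono) auto
    have "v 0 \<le> wu * (norm (x 0 - \<theta>eq))\<^sup>2 / 2" using V_hi by (simp add: v_def)
    also have "\<dots> < wu * \<delta>\<^sup>2 / 2" using n0sq wu_pos by simp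
    finally have v0: "v 0 < L" using \<delta>sq by simp
    have v0nn: "0 \<le> v 0" using V_lo[of "x 0"] wl by (simp add: v_def) (smt (verit) mult_nonneg_nonneg zero_le_power2)
    have E: "\<forall>t\<in>{0..<T}. v t \<le> exp (- (2 * a) * t) * v 0"
      by (rule exp_decay[OF a_pos der dec v0 v0nn])
    show "\<forall>t\<in>{0..<T}. dist (x t) \<theta>eq \<le> M * exp (- a * t) * dist (x 0) \<theta>eq"
    proof
      fix t assume t: "t \<in> {0..<T}"
      have "wl * (norm (x t - \<theta>eq))\<^sup>2 / 2 \<le> exp (- (2 * a) * t) * (wu * (norm (x 0 - \<theta>eq))\<^sup>2 / 2)"
        using V_lo[of "x t"] E[rule_format, OF t] V_hi[of "x 0"]
        by (smt (verit) exp_gt_zero mult_left_mono v_def)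
      then have "(norm (x t - \<theta>eq))\<^sup>2 \<le> (wu / wl) * exp (- (2 * a) * t) * (norm (x 0 - \<theta>eq))\<^sup>2"
        using wl by (simp add: field_simps)
      also have "\<dots> = (M * exp (- a * t) * norm (x 0 - \<theta>eq))\<^sup>2"
      proof -
        have "M\<^sup>2 = wu / wl" using wl wu_pos by (simp add: M_def)
        moreover have "(exp (- a * t))\<^sup>2 = exp (- (2 * a) * t)"
          by (simp add: power2_eq_square exp_add[symmetric])
        ultimately show ?thesis by (simp add: power_mult_distrib)
      qed
      finally have "norm (x t - \<theta>eq) \<le> M * exp (- a * t) * norm (x 0 - \<theta>eq)"
        by (rule power2_le_imp_le) (use wl wu_pos in \<open>auto simp: M_def\<close>)
      then show "dist (x t) \<theta>eq \<le> M * exp (- a * t) * dist (x 0) \<theta>eq" by (simp add: dist_norm)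
    qed
  qed
qed



lemma vsum_deriv2:
  fixes x :: "real \<Rightarrow> real^'n::finite"
  assumes "(x has_vector_derivative D) (at t within S)"
  shows "((\<lambda>t. \<Sum>j\<in>UNIV. w j * (x t $ j - (\<Sum>l\<in>UNIV. w l * x t $ l) / W)\<^sup>2 / 2) has_real_derivative
     (\<Sum>j\<in>UNIV. w j * (x t $ j - (\<Sum>l\<in>UNIV. w l * x t $ l) / W) * (D $ j - (\<Sum>l\<in>UNIV. w l * D $ l) / W))) (at t within S)"
proof (rule DERIV_sum)
  fix j :: 'n
  have dj: "((\<lambda>t. x t $ i) has_real_derivative D $ i) (at t within S)" for i by (rule comp_deriv[OF assms])
  have dm: "((\<lambda>t. (\<Sum>l\<in>UNIV. w l * x t $ l) / W) has_real_derivative (\<Sum>l\<in>UNIV. w l * D $ l) / W) (at t within S)"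
  proof -
    have "((\<lambda>t. \<Sum>l\<in>UNIV. w l * x t $ l) has_real_derivative (\<Sum>l\<in>UNIV. w l * D $ l)) (at t within S)"
      by (rule DERIV_sum) (rule DERIV_cmult[OF dj])
    then show ?thesis by (rule DERIV_cdivide)
  qed
  show "((\<lambda>t. w j * (x t $ j - (\<Sum>l\<in>UNIV. w l * x t $ l) / W)\<^sup>2 / 2) has_real_derivative
      w j * (x t $ j - (\<Sum>l\<in>UNIV. w l * x t $ l) / W) * (D $ j - (\<Sum>l\<in>UNIV. w l * D $ l) / W)) (at t within S)"
    by (rule derivative_eq_intros dj dm refl | simp)+
qed

lemma part2:
  fixes C :: real and \<kappa> r \<iota> \<gamma> :: "'n::finite \<Rightarrow> real"
    and g :: "'n \<Rightarrow> 'n \<Rightarrow> real"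
  assumes C_pos: "C > 0"
    and \<kappa>_pos: "\<forall>j. \<kappa> j > 0"
    and r_pos: "\<forall>j. r j > 0"
    and g_sym: "\<forall>j l. g j l = g l j"
    and g_nonneg: "\<forall>j l. g j l \<ge> 0"
    and connected: "\<forall>j l. (\<lambda>a b. g a b > 0)\<^sup>*\<^sup>* j l"
    and no_load: "\<forall>j. \<iota> j = 0"
  shows "loc_exp_stable_set (phase_field C \<kappa> r g \<iota> \<gamma>) {\<theta>. \<forall>j l. \<theta>$j = \<theta>$l}"
proof -
  let ?f = "phase_field C \<kappa> r g \<iota> \<gamma>"
  let ?S = "{\<theta>::real^'n. \<forall>j l. \<theta>$j = \<theta>$l}"
  define \<rho> :: real where "\<rho> = 1/8"
  have \<rho>: "\<rho> > 0" by (simp add: \<rho>_def)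
  define A where "A j l = g j l * r j * r l" for j l
  have A_nonneg: "A j l \<ge> 0" for j l using g_nonneg r_pos by (auto simp: A_def less_imp_le)
  define w where "w j = 2 * C * (r j)\<^sup>2 / \<kappa> j" for j
  have w_pos: "w j > 0" for j using C_pos r_pos[rule_format, of j] \<kappa>_pos[rule_format, of j] by (auto simp: w_def)
  obtain wl where wl: "wl > 0" "\<forall>j. wl \<le> w j" using finite_pos_min[of w] w_pos by auto
  obtain wu where wu: "\<forall>j. w j \<le> wu" using finite_pos_max[of w] by auto
  have wlu: "wl \<le> wu" using wl wu by (meson order_trans)
  have wu_pos: "wu > 0" using wl wlu by auto
  define W where "W = (\<Sum>j\<in>UNIV. w j)"
  have W_pos: "W > 0" unfolding W_def using w_pos by (simp add: sum_pos)
  define m where "m \<theta> = (\<Sum>l\<in>UNIV. w l * \<theta>$l) / W" for \<theta> :: "real^'n"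
  define e where "e \<theta> = (\<chi> j. \<theta>$j - m \<theta>)" for \<theta> :: "real^'n"
  define V where "V \<theta> = (\<Sum>j\<in>UNIV. w j * (\<theta>$j - m \<theta>)\<^sup>2 / 2)" for \<theta> :: "real^'n"
  define Q where "Q u = (1/2) * (\<Sum>j\<in>UNIV. \<Sum>l\<in>UNIV. A j l * (1/4) * (u$j - u$l)\<^sup>2)" for u :: "real^'n"
  define S2 where "S2 = {u::real^'n. (\<Sum>j\<in>UNIV. w j * u$j) = 0}"
  have wsum0: "(\<Sum>j\<in>UNIV. w j * (\<theta>$j - m \<theta>)) = 0" for \<theta>
  proof -
    have "(\<Sum>j\<in>UNIV. w j * (\<theta>$j - m \<theta>)) = (\<Sum>j\<in>UNIV. w j * \<theta>$j) - m \<theta> * W"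
      by (simp add: W_def algebra_simps sum_subtractf sum_distrib_left)
    then show ?thesis using W_pos by (simp add: m_def)
  qed
  have eS2: "e \<theta> \<in> S2" for \<theta> using wsum0[of \<theta>] by (simp add: S2_def e_def)
  have V_eq: "V \<theta> = (\<Sum>j\<in>UNIV. w j * ((e \<theta>)$j)\<^sup>2) / 2" for \<theta>
    unfolding V_def e_def by (simp add: sum_divide_distrib)
  have V_lo: "wl * (norm (e \<theta>))\<^sup>2 / 2 \<le> V \<theta>" for \<theta>
    unfolding V_eq using weighted_bounds(1)[OF wl(2) wu, of "e \<theta>"] by simp
  have V_hi: "V \<theta> \<le> wu * (norm (e \<theta>))\<^sup>2 / 2" for \<theta>
    unfolding V_eq using weighted_bounds(2)[OF wl(2) wu, of "e \<theta>"] by simp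
  have V_min: "V \<theta> \<le> (\<Sum>j\<in>UNIV. w j * (\<theta>$j - c)\<^sup>2 / 2)" for \<theta> c
  proof -
    have t: "w j * (\<theta>$j - c)\<^sup>2 / 2 = w j * (\<theta>$j - m \<theta>)\<^sup>2 / 2 + (m \<theta> - c) * (w j * (\<theta>$j - m \<theta>)) + (m \<theta> - c)\<^sup>2 / 2 * w j" for j
      by (simp add: power2_eq_square field_simps)
    have "(\<Sum>j\<in>UNIV. w j * (\<theta>$j - c)\<^sup>2 / 2) = V \<theta> + (m \<theta> - c) * (\<Sum>j\<in>UNIV. w j * (\<theta>$j - m \<theta>)) + (m \<theta> - c)\<^sup>2 / 2 * W"
      unfolding t V_def W_def by (simp add: sum.distrib sum_distrib_left)
    then show ?thesis using wsum0[of \<theta>] W_pos by simp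
  qed
  have V_inf: "V \<theta> \<le> wu * (infdist \<theta> ?S)\<^sup>2 / 2" for \<theta>
  proof -
    have ne: "?S \<noteq> {}" proof - have "(0::real^'n) \<in> ?S" by simp then show ?thesis by blast qed
    have "sqrt (2 * V \<theta> / wu) \<le> dist \<theta> y" if y: "y \<in> ?S" for y
    proof -
      define c where "c = y $ (undefined::'n)"
      have yc: "y$j = c" for j using y by (simp add: c_def)
      have "V \<theta> \<le> (\<Sum>j\<in>UNIV. w j * ((\<theta> - y)$j)\<^sup>2) / 2" using V_min[of \<theta> c]
        by (simp add: yc sum_divide_distrib)
      also have "\<dots> \<le> wu * (norm (\<theta> - y))\<^sup>2 / 2" using weighted_bounds(2)[OF wl(2) wu, of "\<theta> - y"] by simp
      finally have "2 * V \<theta> / wu \<le> (dist \<theta> y)\<^sup>2" using wu_pos by (simp add: dist_norm field_simps)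
      then have "sqrt (2 * V \<theta> / wu) \<le> sqrt ((dist \<theta> y)\<^sup>2)" by (rule real_sqrt_le_mono)
      then show ?thesis by simp
    qed
    then have a1: "sqrt (2 * V \<theta> / wu) \<le> infdist \<theta> ?S"
      unfolding infdist_notempty[OF ne] by (rule cINF_greatest[OF ne]) blast
    have a2: "V \<theta> \<ge> 0"
    proof -
      have "0 \<le> wl * (norm (e \<theta>))\<^sup>2 / 2" using wl by simp
      then show ?thesis using V_lo[of \<theta>] by linarith
    qed
    have nn: "2 * V \<theta> / wu \<ge> 0" using a2 wu_pos by (auto intro!: divide_nonneg_pos)
    have "(sqrt (2 * V \<theta> / wu))\<^sup>2 \<le> (infdist \<theta> ?S)\<^sup>2" by (rule power_mono[OF a1]) (use nn in simp)
    then have "2 * V \<theta> / wu \<le> (infdist \<theta> ?S)\<^sup>2" using nn by simp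
    then show ?thesis using wu_pos by (simp add: field_simps)
  qed
  have inf_le: "infdist \<theta> ?S \<le> norm (e \<theta>)" for \<theta>
  proof -
    have "(\<chi> j. m \<theta>) \<in> ?S" by simp
    then have "infdist \<theta> ?S \<le> dist \<theta> (\<chi> j. m \<theta>)" by (rule infdist_le)
    also have "dist \<theta> (\<chi> j. m \<theta>) = norm (e \<theta>)" by (simp add: dist_norm e_def vec_eq_iff minus_vec_def)
    finally show ?thesis .
  qed
  have Q_cont: "continuous_on UNIV Q" unfolding Q_def by (intro continuous_intros)
  have Q_hom: "\<forall>c u. Q (c *\<^sub>R u) = c\<^sup>2 * Q u"
  proof (intro allI)
    fix c and u :: "real^'n"
    have "(c * u$j - c * u$l)\<^sup>2 = c\<^sup>2 * (u$j - u$l)\<^sup>2" for j l by (simp add: power2_eq_square algebra_simps)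
    then show "Q (c *\<^sub>R u) = c\<^sup>2 * Q u"
      unfolding Q_def by (simp add: power_mult_distrib sum_distrib_left algebra_simps)
  qed
  have S2_closed: "closed S2" unfolding S2_def
    by (rule closed_Collect_eq) (intro continuous_intros)+
  have S2_scale: "\<forall>c u. u \<in> S2 \<longrightarrow> c *\<^sub>R u \<in> S2"
  proof (intro allI impI)
    fix c and u :: "real^'n" assume "u \<in> S2"
    then have "(\<Sum>j\<in>UNIV. w j * u$j) = 0" by (simp add: S2_def)
    then have "c * (\<Sum>j\<in>UNIV. w j * u$j) = 0" by simp
    then show "c *\<^sub>R u \<in> S2" by (simp add: S2_def sum_distrib_left algebra_simps)
  qed
  have t2_nonneg: "A j l * (1/4) * (u$j - u$l)\<^sup>2 \<ge> 0" for j l u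
    using A_nonneg by (intro mult_nonneg_nonneg) auto
  have Q_pos: "\<forall>u\<in>S2. u \<noteq> 0 \<longrightarrow> Q u > 0"
  proof (intro ballI impI)
    fix u :: "real^'n" assume uS: "u \<in> S2" and u: "u \<noteq> 0"
    have S2': "(\<Sum>j\<in>UNIV. \<Sum>l\<in>UNIV. A j l * (1/4) * (u$j - u$l)\<^sup>2) \<ge> 0"
      by (intro sum_nonneg t2_nonneg)
    show "Q u > 0"
    proof (rule ccontr)
      assume "\<not> Q u > 0"
      then have z2: "(\<Sum>j\<in>UNIV. \<Sum>l\<in>UNIV. A j l * (1/4) * (u$j - u$l)\<^sup>2) = 0"
        using S2' unfolding Q_def by linarith
      have "(\<Sum>l\<in>UNIV. A j l * (1/4) * (u$j - u$l)\<^sup>2) = 0" for j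
        using sum_nonneg_eq_0_iff[of "UNIV::'n set" "\<lambda>j. \<Sum>l\<in>UNIV. A j l * (1/4) * (u$j - u$l)\<^sup>2", OF finite sum_nonneg[OF t2_nonneg]] z2
        by blast
      then have e2: "A j l * (1/4) * (u$j - u$l)\<^sup>2 = 0" for j l
        using sum_nonneg_eq_0_iff[of "UNIV::'n set" "\<lambda>l. A j l * (1/4) * (u$j - u$l)\<^sup>2", OF finite t2_nonneg]
        by blast
      have edge: "\<forall>a b. g a b > 0 \<longrightarrow> u$a = u$b"
      proof (intro allI impI)
        fix a b assume "g a b > 0"
        then have "A a b > 0" using r_pos by (auto simp: A_def)
        then show "u$a = u$b" using e2[of a b] by auto
      qed
      define k where "k = u $ (undefined::'n)"
      have uk: "u$j = k" for j using conn_const[OF connected[rule_format, of j undefined] edge] by (simp add: k_def)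
      have "k * W = 0" using uS by (simp add: S2_def uk W_def sum_distrib_left mult.commute)
      then have "k = 0" using W_pos by simp
      then show False using u uk by (simp add: vec_eq_iff)
    qed
  qed
  obtain \<mu> where \<mu>: "\<mu> > 0" "\<forall>u\<in>S2. Q u \<ge> \<mu> * (norm u)\<^sup>2"
    using quad_lower[OF Q_cont Q_hom S2_closed S2_scale Q_pos] by auto
  have F0: "Fn r g \<iota> \<gamma> 0 j = 0" for j using no_load by (simp add: Fn_def)
  have key: "(\<Sum>j\<in>UNIV. w j * (\<theta>$j - m \<theta>) * (?f \<theta>)$j) \<le> - Q (e \<theta>)"
    if n\<rho>: "norm (e \<theta>) < \<rho>" for \<theta>
  proof -
    define u where "u = e \<theta>"
    have ub: "\<bar>u$j\<bar> < \<rho>" for j using component_le_norm_cart[of u j] n\<rho> by (simp add: u_def)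
    have ud: "u$j - u$l = \<theta>$j - \<theta>$l" for j l by (simp add: u_def e_def)
    have "(\<Sum>j\<in>UNIV. w j * (\<theta>$j - m \<theta>) * (?f \<theta>)$j)
        = (\<Sum>j\<in>UNIV. r j * u$j * (Fn r g \<iota> \<gamma> \<theta> j - Fn r g \<iota> \<gamma> 0 j))"
    proof (rule sum.cong[OF refl])
      fix j
      have h: "w j * (?f \<theta>)$j = r j * Fn r g \<iota> \<gamma> \<theta> j"
        unfolding w_def using field_F[OF C_pos, of \<kappa> j r] \<kappa>_pos r_pos by auto
      have "w j * (\<theta>$j - m \<theta>) * (?f \<theta>)$j = (\<theta>$j - m \<theta>) * (w j * (?f \<theta>)$j)" by (simp add: ac_simps)
      also have "\<dots> = (\<theta>$j - m \<theta>) * (r j * Fn r g \<iota> \<gamma> \<theta> j)" by (simp only: h)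
      finally show "w j * (\<theta>$j - m \<theta>) * (?f \<theta>)$j = r j * u$j * (Fn r g \<iota> \<gamma> \<theta> j - Fn r g \<iota> \<gamma> 0 j)"
        by (simp add: F0 u_def e_def ac_simps)
    qed
    also have "\<dots> = (\<Sum>j\<in>UNIV. r j * \<iota> j * u$j * (sin (\<theta>$j - \<gamma> j) - sin ((0::real^'n)$j - \<gamma> j)))
       - (1/2) * (\<Sum>j\<in>UNIV. \<Sum>l\<in>UNIV. (g j l * r j * r l) * (u$j - u$l) * ((sin (\<theta>$j - \<theta>$l) - sin ((0::real^'n)$j - (0::real^'n)$l))))"
      by (rule key_identity[OF g_sym])
    also have "\<dots> = - (1/2) * (\<Sum>j\<in>UNIV. \<Sum>l\<in>UNIV. (g j l * r j * r l) * (u$j - u$l) * sin (u$j - u$l))"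
      using no_load by (simp add: ud)
    also have "\<dots> \<le> - (1/2) * (\<Sum>j\<in>UNIV. \<Sum>l\<in>UNIV. A j l * (1/4) * (u$j - u$l)\<^sup>2)"
    proof -
      have "(\<Sum>j\<in>UNIV. \<Sum>l\<in>UNIV. A j l * (1/4) * (u$j - u$l)\<^sup>2) \<le> (\<Sum>j\<in>UNIV. \<Sum>l\<in>UNIV. (g j l * r j * r l) * (u$j - u$l) * sin (u$j - u$l))"
      proof (intro sum_mono)
        fix j l
        have "\<bar>u$j - u$l\<bar> \<le> (1/2)/2" using ub[of j] ub[of l] abs_triangle_ineq4[of "u$j" "u$l"] unfolding \<rho>_def by linarith
        then have "(sin (0 + (u$j - u$l)) - sin 0) * (u$j - u$l) \<ge> (1/2)/2 * (u$j - u$l)\<^sup>2"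
          by (intro sin_pos_ineq) auto
        then have "sin (u$j - u$l) * (u$j - u$l) \<ge> 1/4 * (u$j - u$l)\<^sup>2" by simp
        then have "A j l * (1/4 * (u$j - u$l)\<^sup>2) \<le> A j l * (sin (u$j - u$l) * (u$j - u$l))"
          by (intro mult_left_mono A_nonneg)
        then show "A j l * (1/4) * (u$j - u$l)\<^sup>2 \<le> (g j l * r j * r l) * (u$j - u$l) * sin (u$j - u$l)"
          by (simp add: A_def algebra_simps)
      qed
      then show ?thesis by simp
    qed
    also have "\<dots> = - Q u" unfolding Q_def by simp
    finally show ?thesis by (simp add: u_def)
  qed
  define a where "a = \<mu> / wu"
  have a_pos: "a > 0" using \<mu> wu_pos by (simp add: a_def)
  define L where "L = wl * \<rho>\<^sup>2 / 2"
  define \<delta> where "\<delta> = \<rho> * sqrt (wl / wu)"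
  define M where "M = sqrt (wu / wl)"
  have \<delta>_pos: "\<delta> > 0" using \<rho> wl wu_pos by (simp add: \<delta>_def)
  have \<delta>sq: "wu * \<delta>\<^sup>2 / 2 = L" using wl wu_pos by (simp add: \<delta>_def L_def power_mult_distrib)
  have small: "norm (e \<theta>) < \<rho>" if "V \<theta> < L" for \<theta>
  proof -
    have "wl * (norm (e \<theta>))\<^sup>2 < wl * \<rho>\<^sup>2" using V_lo[of \<theta>] that by (simp add: L_def)
    then have "(norm (e \<theta>))\<^sup>2 < \<rho>\<^sup>2" using wl by simp
    then show ?thesis using \<rho> by (simp add: power2_less_imp_less)
  qed
  have decay: "(\<Sum>j\<in>UNIV. w j * (\<theta>$j - m \<theta>) * (?f \<theta>)$j) \<le> - (2 * a) * V \<theta>" if "V \<theta> < L" for \<theta>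
  proof -
    have "(\<Sum>j\<in>UNIV. w j * (\<theta>$j - m \<theta>) * (?f \<theta>)$j) \<le> - Q (e \<theta>)" using key small that by blast
    also have "\<dots> \<le> - (\<mu> * (norm (e \<theta>))\<^sup>2)" using \<mu> eS2 by auto
    also have "\<dots> \<le> - (2 * a) * V \<theta>"
    proof -
      have "V \<theta> * 2 \<le> wu * (norm (e \<theta>))\<^sup>2" using V_hi[of \<theta>] by simp
      then have "\<mu> * (V \<theta> * 2) \<le> \<mu> * (wu * (norm (e \<theta>))\<^sup>2)" using \<mu> by (intro mult_left_mono) auto
      then show ?thesis using wu_pos by (simp add: a_def field_simps)
    qed
    finally show ?thesis .
  qed
  show ?thesis unfolding loc_exp_stable_set_def
  proof (rule exI[of _ \<delta>], intro conjI \<delta>_pos, rule exI[of _ M], rule exI[of _ a], intro conjI a_pos allI impI)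
    fix x :: "real \<Rightarrow> real^'n" and T :: real
    assume asm: "T > 0 \<and> solves_on ?f x T \<and> infdist (x 0) ?S < \<delta>"
    then have sol: "\<forall>t\<in>{0..<T}. (x has_vector_derivative ?f (x t)) (at t within {0..<T})"
      and d0: "infdist (x 0) ?S < \<delta>" by (auto simp: solves_on_def)
    define v where "v t = V (x t)" for t
    define v' where "v' t = (\<Sum>j\<in>UNIV. w j * (x t$j - m (x t)) * (?f (x t))$j)" for t
    have der: "\<forall>t\<in>{0..<T}. (v has_real_derivative v' t) (at t within {0..<T})"
    proof
      fix t assume t: "t \<in> {0..<T}"
      let ?D = "?f (x t)"
      have "(v has_real_derivative (\<Sum>j\<in>UNIV. w j * (x t $ j - (\<Sum>l\<in>UNIV. w l * x t $ l) / W) * (?D $ j - (\<Sum>l\<in>UNIV. w l * ?D $ l) / W))) (at t within {0..<T})"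
        unfolding v_def V_def m_def using vsum_deriv2 sol t by blast
      moreover have "(\<Sum>j\<in>UNIV. w j * (x t $ j - (\<Sum>l\<in>UNIV. w l * x t $ l) / W) * (?D $ j - (\<Sum>l\<in>UNIV. w l * ?D $ l) / W)) = v' t"
      proof -
        let ?m' = "(\<Sum>l\<in>UNIV. w l * ?D $ l) / W"
        have "(\<Sum>j\<in>UNIV. w j * (x t $ j - m (x t)) * (?D $ j - ?m'))
            = (\<Sum>j\<in>UNIV. w j * (x t $ j - m (x t)) * ?D $ j) - ?m' * (\<Sum>j\<in>UNIV. w j * (x t $ j - m (x t)))"
        proof -
          have tt: "w j * (x t $ j - m (x t)) * (?D $ j - ?m') = w j * (x t $ j - m (x t)) * ?D $ j - ?m' * (w j * (x t $ j - m (x t)))" for j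
            by (simp add: algebra_simps)
          show ?thesis by (simp only: tt sum_subtractf) (simp only: sum_distrib_left)
        qed
        then show ?thesis using wsum0[of "x t"] by (simp add: v'_def m_def)
      qed
      ultimately show "(v has_real_derivative v' t) (at t within {0..<T})" by simp
    qed
    have dec: "\<forall>t\<in>{0..<T}. v t < L \<longrightarrow> v' t \<le> - (2 * a) * v t"
      unfolding v_def v'_def using decay by blast
    have i0: "0 \<le> infdist (x 0) ?S" by (rule infdist_nonneg)
    have n0sq: "(infdist (x 0) ?S)\<^sup>2 < \<delta>\<^sup>2" using d0 i0 by (intro power_strict_mono) auto
    have "v 0 \<le> wu * (infdist (x 0) ?S)\<^sup>2 / 2" using V_inf by (simp add: v_def)
    also have "\<dots> < wu * \<delta>\<^sup>2 / 2" using n0sq wu_pos by simp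
    finally have v0: "v 0 < L" using \<delta>sq by simp
    have v0nn: "0 \<le> v 0"
    proof -
      have "0 \<le> wl * (norm (e (x 0)))\<^sup>2 / 2" using wl by simp
      then show ?thesis using V_lo[of "x 0"] by (simp add: v_def)
    qed
    have E: "\<forall>t\<in>{0..<T}. v t \<le> exp (- (2 * a) * t) * v 0"
      by (rule exp_decay[OF a_pos der dec v0 v0nn])
    show "\<forall>t\<in>{0..<T}. infdist (x t) ?S \<le> M * exp (- a * t) * infdist (x 0) ?S"
    proof
      fix t assume t: "t \<in> {0..<T}"
      have "wl * (norm (e (x t)))\<^sup>2 / 2 \<le> v t" using V_lo[of "x t"] by (simp add: v_def)
      also have "\<dots> \<le> exp (- (2 * a) * t) * v 0" using E t by blast
      also have "\<dots> \<le> exp (- (2 * a) * t) * (wu * (infdist (x 0) ?S)\<^sup>2 / 2)"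
        using V_inf[of "x 0"] by (intro mult_left_mono) (auto simp: v_def)
      finally have "(norm (e (x t)))\<^sup>2 \<le> (wu / wl) * exp (- (2 * a) * t) * (infdist (x 0) ?S)\<^sup>2"
        using wl by (simp add: field_simps)
      also have "\<dots> = (M * exp (- a * t) * infdist (x 0) ?S)\<^sup>2"
      proof -
        have "M\<^sup>2 = wu / wl" using wl wu_pos by (simp add: M_def)
        moreover have "(exp (- a * t))\<^sup>2 = exp (- (2 * a) * t)"
          by (simp add: power2_eq_square exp_add[symmetric])
        ultimately show ?thesis by (simp add: power_mult_distrib)
      qed
      finally have "norm (e (x t)) \<le> M * exp (- a * t) * infdist (x 0) ?S"
        by (rule power2_le_imp_le) (use wl wu_pos i0 in \<open>auto simp: M_def\<close>)
      then show "infdist (x t) ?S \<le> M * exp (- a * t) * infdist (x 0) ?S" using inf_le[of "x t"] by linarith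
    qed
  qed
qed


theorem theorem4:
  fixes C :: real and \<kappa> r \<iota> \<gamma> :: "'n::finite \<Rightarrow> real"
    and g :: "'n \<Rightarrow> 'n \<Rightarrow> real" and \<theta>eq :: "real^'n"
  assumes C_pos: "C > 0"
    and \<kappa>_pos: "\<forall>j. \<kappa> j > 0"
    and r_pos: "\<forall>j. r j > 0"
    and g_sym: "\<forall>j l. g j l = g l j"
    and g_nonneg: "\<forall>j l. g j l \<ge> 0"
    and connected: "\<forall>j l. (\<lambda>a b. g a b > 0)\<^sup>*\<^sup>* j l"
    and \<iota>_nonneg: "\<forall>j. \<iota> j \<ge> 0"
    and equilibrium: "phase_field C \<kappa> r g \<iota> \<gamma> \<theta>eq = 0"
    and close_phases: "\<forall>j l. cos (\<theta>eq$j - \<theta>eq$l) > 0"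
    and anti_phase: "\<forall>j. cos (\<theta>eq$j - \<gamma> j) < 0"
  shows "((\<exists>j. \<iota> j > 0) \<longrightarrow> loc_exp_stable_point (phase_field C \<kappa> r g \<iota> \<gamma>) \<theta>eq)
       \<and> ((\<forall>j. \<iota> j = 0) \<longrightarrow>
            loc_exp_stable_set (phase_field C \<kappa> r g \<iota> \<gamma>) {\<theta>. \<forall>j l. \<theta>$j = \<theta>$l})"
    using part1[OF C_pos \<kappa>_pos r_pos g_sym g_nonneg connected \<iota>_nonneg equilibrium close_phases anti_phase]
    part2[OF C_pos \<kappa>_pos r_pos g_sym g_nonneg connected]
  by blast

end
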